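(* Let \(D\) be a bornological \(V\)-algebra and let \(D'\) be \(D\) with the compactoid bornology. Then \(D'\) is again a bornological \(V\)-algebra. If \(D\) is semidagger, then so is \(D'\).
   Context: Let \(V\) be a complete discrete valuation ring with uniformiser \(\pi\). A bornology on a set is a collection of subsets (called bounded) containing all finite subsets and closed under finite unions and under taking subsets. A bornological \(V\)-module is a \(V\)-module with a bornology such that every bounded subset is contained in a bounded \(V\)-submodule. A bornological \(V\)-algebra is a \(V\)-algebra with such a bornology for which multiplication is bounded (if \(S,T\) are bounded then so is \(S\cdot T\)). It is semidagger if for every bounded subset \(S\subseteq D\), the \(V\)-submodule \(\sum_{i=0}^\infty \pi^i S^{i+1}\) (generated by all products \(\pi^i s_0\cdots s_i\) with \(s_j\in S\)) is bounded. A subset \(S\subseteq D\) is compactoid if there is a bounded \(V\)-submodule \(T\subseteq D\) with \(S\subseteq T\) such that for every \(n\in\mathbb N\) there is a finite set \(F_n\subseteq T\) with \(S\subseteq VF_n+\pi^nT\); the compactoid bornology consists of the compactoid subsets. *)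

theory Defs
  imports Main
begin

text \<open>V is modelled as a type 'v of class idom. pi is a uniformiser of a DVR structure
 on V: pi is nonzero, not a unit, and every nonzero element is a unit times a power of pi.\<close>
definition dvr_uniformiser :: "'v::idom \<Rightarrow> bool" where
  "dvr_uniformiser p \<longleftrightarrow> p \<noteq> 0 \<and> \<not> p dvd 1 \<and>
     (\<forall>x. x \<noteq> 0 \<longrightarrow> (\<exists>u n. u dvd 1 \<and> x = u * p ^ n))"

text \<open>pi-adic completeness (separatedness already follows from the DVR condition).\<close>
definition pi_adically_complete :: "'v::idom \<Rightarrow> bool" where
  "pi_adically_complete p \<longleftrightarrow>
     (\<forall>a::nat \<Rightarrow> 'v. \<exists>x. \<forall>n. p ^ n dvd (x - (\<Sum>i<n. a i * p ^ i)))"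

definition v_algebra :: "('v::comm_ring_1 \<Rightarrow> 'd::ring \<Rightarrow> 'd) \<Rightarrow> bool" where
  "v_algebra sm \<longleftrightarrow>
     (\<forall>a b x. sm (a + b) x = sm a x + sm b x) \<and>
     (\<forall>a x y. sm a (x + y) = sm a x + sm a y) \<and>
     (\<forall>a b x. sm (a * b) x = sm a (sm b x)) \<and>
     (\<forall>x. sm 1 x = x) \<and>
     (\<forall>a x y. sm a (x * y) = sm a x * y) \<and>
     (\<forall>a x y. sm a (x * y) = x * sm a y)"

definition v_submodule :: "('v \<Rightarrow> 'd::ring \<Rightarrow> 'd) \<Rightarrow> 'd set \<Rightarrow> bool" where
  "v_submodule sm T \<longleftrightarrow> 0 \<in> T \<and> (\<forall>x\<in>T. \<forall>y\<in>T. x + y \<in> T) \<and> (\<forall>a. \<forall>x\<in>T. sm a x \<in> T)"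

definition v_span :: "('v \<Rightarrow> 'd::ring \<Rightarrow> 'd) \<Rightarrow> 'd set \<Rightarrow> 'd set" where
  "v_span sm X = \<Inter>{T. v_submodule sm T \<and> X \<subseteq> T}"

definition bornology :: "'a set set \<Rightarrow> bool" where
  "bornology B \<longleftrightarrow> (\<forall>S. finite S \<longrightarrow> S \<in> B) \<and>
     (\<forall>S\<in>B. \<forall>T\<in>B. S \<union> T \<in> B) \<and> (\<forall>S\<in>B. \<forall>T. T \<subseteq> S \<longrightarrow> T \<in> B)"

definition bornological_module :: "('v \<Rightarrow> 'd::ring \<Rightarrow> 'd) \<Rightarrow> 'd set set \<Rightarrow> bool" where
  "bornological_module sm B \<longleftrightarrow> bornology B \<and>
     (\<forall>S\<in>B. \<exists>T\<in>B. v_submodule sm T \<and> S \<subseteq> T)"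

definition set_mult :: "'d::times set \<Rightarrow> 'd set \<Rightarrow> 'd set" where
  "set_mult S T = {s * t | s t. s \<in> S \<and> t \<in> T}"

definition bornological_algebra :: "('v::comm_ring_1 \<Rightarrow> 'd::ring \<Rightarrow> 'd) \<Rightarrow> 'd set set \<Rightarrow> bool" where
  "bornological_algebra sm B \<longleftrightarrow> v_algebra sm \<and> bornological_module sm B \<and>
     (\<forall>S\<in>B. \<forall>T\<in>B. set_mult S T \<in> B)"

text \<open>prods S i = set of products s_0 * ... * s_i with all s_j in S.\<close>
fun prods :: "'d::times set \<Rightarrow> nat \<Rightarrow> 'd set" where
  "prods S 0 = S"
| "prods S (Suc n) = set_mult (prods S n) S"

definition semidagger :: "('v::comm_ring_1 \<Rightarrow> 'd::ring \<Rightarrow> 'd) \<Rightarrow> 'v \<Rightarrow> 'd set set \<Rightarrow> bool" where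
  "semidagger sm p B \<longleftrightarrow>
     (\<forall>S\<in>B. v_span sm (\<Union>i. sm (p ^ i) ` prods S i) \<in> B)"

definition compactoid :: "('v::comm_ring_1 \<Rightarrow> 'd::ring \<Rightarrow> 'd) \<Rightarrow> 'v \<Rightarrow> 'd set set \<Rightarrow> 'd set \<Rightarrow> bool" where
  "compactoid sm p B S \<longleftrightarrow>
     (\<exists>T. T \<in> B \<and> v_submodule sm T \<and> S \<subseteq> T \<and>
        (\<forall>n::nat. \<exists>F. finite F \<and> F \<subseteq> T \<and>
            S \<subseteq> {a + b | a b. a \<in> v_span sm F \<and> b \<in> sm (p ^ n) ` T}))"

definition compactoid_bornology :: "('v::comm_ring_1 \<Rightarrow> 'd::ring \<Rightarrow> 'd) \<Rightarrow> 'v \<Rightarrow> 'd set set \<Rightarrow> 'd set set" where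
  "compactoid_bornology sm p B = {S. compactoid sm p B S}"

end

theory Submission
  imports Defs
begin

definition pl :: "('v \<Rightarrow> 'd::ring \<Rightarrow> 'd) \<Rightarrow> 'd set \<Rightarrow> 'v \<Rightarrow> 'd set \<Rightarrow> 'd set" where
  "pl sm A c B = {a + sm c b | a b. a \<in> A \<and> b \<in> B}"

lemma pl_eq: "{a + b | a b. a \<in> A \<and> b \<in> sm c ` B} = pl sm A c B"
  unfolding pl_def by blast

lemma span_sub: "X \<subseteq> v_span sm X"
  unfolding v_span_def by blast

lemma span_least: "v_submodule sm T \<Longrightarrow> X \<subseteq> T \<Longrightarrow> v_span sm X \<subseteq> T"
  unfolding v_span_def by blast

lemma span_submod: "v_submodule sm (v_span sm X)"
  unfolding v_submodule_def
proof (intro conjI ballI allI)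
  show "0 \<in> v_span sm X" unfolding v_span_def v_submodule_def by blast
next
  fix x y assume x: "x \<in> v_span sm X" and y: "y \<in> v_span sm X"
  show "x + y \<in> v_span sm X" unfolding v_span_def
  proof (rule InterI)
    fix T assume T: "T \<in> {T. v_submodule sm T \<and> X \<subseteq> T}"
    hence "x \<in> T" "y \<in> T" using x y unfolding v_span_def by blast+
    thus "x + y \<in> T" using T unfolding v_submodule_def by blast
  qed
next
  fix a x assume x: "x \<in> v_span sm X"
  show "sm a x \<in> v_span sm X" unfolding v_span_def
  proof (rule InterI)
    fix T assume T: "T \<in> {T. v_submodule sm T \<and> X \<subseteq> T}"
    hence "x \<in> T" using x unfolding v_span_def by blast
    thus "sm a x \<in> T" using T unfolding v_submodule_def by blast
  qed
qed

lemma span_mono: "X \<subseteq> Y \<Longrightarrow> v_span sm X \<subseteq> v_span sm Y"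
  unfolding v_span_def by blast

lemma span_zero: "0 \<in> v_span sm X"
  using span_submod unfolding v_submodule_def by blast

lemma span_add: "x \<in> v_span sm X \<Longrightarrow> y \<in> v_span sm X \<Longrightarrow> x + y \<in> v_span sm X"
  using span_submod[of sm X] unfolding v_submodule_def by blast

lemma span_smult: "x \<in> v_span sm X \<Longrightarrow> sm a x \<in> v_span sm X"
  using span_submod[of sm X] unfolding v_submodule_def by blast

lemma sm_zero:
  assumes "v_algebra sm" shows "sm a 0 = 0"
proof -
  have "sm a (0 + 0) = sm a 0 + sm a 0" using assms unfolding v_algebra_def by blast
  thus ?thesis by simp
qed

lemma sm_comm:
  fixes sm :: "'v::comm_ring_1 \<Rightarrow> 'd::ring \<Rightarrow> 'd"
  assumes "v_algebra sm" shows "sm a (sm b x) = sm b (sm a x)"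
proof -
  have "sm a (sm b x) = sm (a * b) x" using assms unfolding v_algebra_def by metis
  also have "\<dots> = sm (b * a) x" by (simp add: mult.commute)
  also have "\<dots> = sm b (sm a x)" using assms unfolding v_algebra_def by metis
  finally show ?thesis .
qed

lemma pl_submod:
  fixes sm :: "'v::comm_ring_1 \<Rightarrow> 'd::ring \<Rightarrow> 'd"
  assumes va: "v_algebra sm" and A: "v_submodule sm A" and B: "v_submodule sm B"
  shows "v_submodule sm (pl sm A c B)"
proof -
  have add: "\<And>a b x y. sm a (x + y) = sm a x + sm a y" using va unfolding v_algebra_def by blast
  have "0 \<in> pl sm A c B"
    unfolding pl_def using A B sm_zero[OF va] unfolding v_submodule_def by force
  moreover have "x + y \<in> pl sm A c B" if xy: "x \<in> pl sm A c B" "y \<in> pl sm A c B" for x y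
  proof -
    obtain a1 b1 where 1: "x = a1 + sm c b1" "a1 \<in> A" "b1 \<in> B" using xy(1) unfolding pl_def by blast
    obtain a2 b2 where 2: "y = a2 + sm c b2" "a2 \<in> A" "b2 \<in> B" using xy(2) unfolding pl_def by blast
    have "x + y = (a1 + a2) + sm c (b1 + b2)" using 1 2 add by (simp add: algebra_simps)
    moreover have "a1 + a2 \<in> A" "b1 + b2 \<in> B" using 1 2 A B unfolding v_submodule_def by auto
    ultimately show ?thesis unfolding pl_def by blast
  qed
  moreover have "sm d x \<in> pl sm A c B" if xx: "x \<in> pl sm A c B" for x d
  proof -
    obtain a1 b1 where 1: "x = a1 + sm c b1" "a1 \<in> A" "b1 \<in> B" using xx unfolding pl_def by blast
    have "sm d x = sm d a1 + sm c (sm d b1)" using 1 add sm_comm[OF va] by simp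
    moreover have "sm d a1 \<in> A" "sm d b1 \<in> B" using 1 A B unfolding v_submodule_def by auto
    ultimately show ?thesis unfolding pl_def by blast
  qed
  ultimately show ?thesis by (simp add: v_submodule_def)
qed

lemma span_mult:
  fixes sm :: "'v::comm_ring_1 \<Rightarrow> 'd::ring \<Rightarrow> 'd"
  assumes va: "v_algebra sm"
  shows "x \<in> v_span sm X \<Longrightarrow> y \<in> v_span sm Y \<Longrightarrow> x * y \<in> v_span sm (set_mult X Y)"
proof -
  have add1: "\<And>a b x y. sm a (x + y) = sm a x + sm a y"
   and m1: "\<And>a x y. sm a (x * y) = sm a x * y"
   and m2: "\<And>a x y. sm a (x * y) = x * sm a y" using va unfolding v_algebra_def by blast+
  let ?Z = "v_span sm (set_mult X Y)"
  have step1: "\<forall>y\<in>Y. \<forall>x\<in>v_span sm X. x * y \<in> ?Z"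
  proof
    fix y assume y: "y \<in> Y"
    have "v_submodule sm {x. x * y \<in> ?Z}"
      unfolding v_submodule_def
    proof (intro conjI ballI allI)
      show "0 \<in> {x. x * y \<in> ?Z}" by (simp add: span_zero)
      fix a u v assume "u \<in> {x. x * y \<in> ?Z}" "v \<in> {x. x * y \<in> ?Z}"
      thus "u + v \<in> {x. x * y \<in> ?Z}" by (simp add: distrib_right span_add)
    next
      fix a u assume "u \<in> {x. x * y \<in> ?Z}"
      hence "sm a (u * y) \<in> ?Z" by (simp add: span_smult)
      thus "sm a u \<in> {x. x * y \<in> ?Z}" by (simp add: m1)
    qed
    moreover have "X \<subseteq> {x. x * y \<in> ?Z}"
      using y span_sub[of "set_mult X Y" sm] unfolding set_mult_def by blast
    ultimately show "\<forall>x\<in>v_span sm X. x * y \<in> ?Z" using span_least by blast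
  qed
  show "x \<in> v_span sm X \<Longrightarrow> y \<in> v_span sm Y \<Longrightarrow> x * y \<in> ?Z"
  proof -
    assume x: "x \<in> v_span sm X" and yy: "y \<in> v_span sm Y"
    have "v_submodule sm {y. x * y \<in> ?Z}"
      unfolding v_submodule_def
    proof (intro conjI ballI allI)
      show "0 \<in> {y. x * y \<in> ?Z}" by (simp add: span_zero)
      fix a u v assume "u \<in> {y. x * y \<in> ?Z}" "v \<in> {y. x * y \<in> ?Z}"
      thus "u + v \<in> {y. x * y \<in> ?Z}" by (simp add: distrib_left span_add)
    next
      fix a u assume "u \<in> {y. x * y \<in> ?Z}"
      hence "sm a (x * u) \<in> ?Z" by (simp add: span_smult)
      thus "sm a u \<in> {y. x * y \<in> ?Z}" by (simp add: m2)
    qed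
    moreover have "Y \<subseteq> {y. x * y \<in> ?Z}" using step1 x by blast
    ultimately show ?thesis using span_least yy by blast
  qed
qed

lemma span_scale:
  fixes sm :: "'v::comm_ring_1 \<Rightarrow> 'd::ring \<Rightarrow> 'd"
  assumes va: "v_algebra sm"
  shows "sm c ` v_span sm X \<subseteq> v_span sm (sm c ` X)"
proof -
  have add1: "\<And>a x y. sm a (x + y) = sm a x + sm a y" using va unfolding v_algebra_def by blast
  let ?Z = "v_span sm (sm c ` X)"
  have "v_submodule sm {x. sm c x \<in> ?Z}"
    unfolding v_submodule_def
  proof (intro conjI ballI allI)
    show "0 \<in> {x. sm c x \<in> ?Z}" by (simp add: span_zero sm_zero[OF va])
    fix a u v assume "u \<in> {x. sm c x \<in> ?Z}" "v \<in> {x. sm c x \<in> ?Z}"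
    thus "u + v \<in> {x. sm c x \<in> ?Z}" by (simp add: add1 span_add)
  next
    fix a u assume "u \<in> {x. sm c x \<in> ?Z}"
    hence "sm a (sm c u) \<in> ?Z" by (simp add: span_smult)
    thus "sm a u \<in> {x. sm c x \<in> ?Z}" using sm_comm[OF va, of a c u] by simp
  qed
  moreover have "X \<subseteq> {x. sm c x \<in> v_span sm (sm c ` X)}" using span_sub by blast
  ultimately show ?thesis using span_least by blast
qed

lemma finite_set_mult: "finite S \<Longrightarrow> finite T \<Longrightarrow> finite (set_mult S T)"
proof -
  assume "finite S" "finite T"
  moreover have "set_mult S T = (\<lambda>(s,t). s * t) ` (S \<times> T)" unfolding set_mult_def by auto
  ultimately show ?thesis by simp
qed

lemma finite_prods: "finite S \<Longrightarrow> finite (prods S i)"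
  by (induction i) (auto simp: finite_set_mult)

lemma set_mult_mono: "A \<subseteq> A' \<Longrightarrow> B \<subseteq> B' \<Longrightarrow> set_mult A B \<subseteq> set_mult A' B'"
  unfolding set_mult_def by blast

lemma prods_mono: "S \<subseteq> T \<Longrightarrow> prods S i \<subseteq> prods T i"
  by (induction i) (auto intro: set_mult_mono[THEN subsetD])

lemma prods_group:
  fixes T Q :: "'d::ring set"
  assumes "T \<subseteq> Q" "set_mult T T \<subseteq> Q"
  shows "\<forall>i. j \<le> i \<and> i \<le> 2*j+1 \<longrightarrow> prods T i \<subseteq> prods Q j"
proof (induction j)
  case 0
  show ?case
  proof (intro allI impI)
    fix i :: nat assume "0 \<le> i \<and> i \<le> 2*0+1"
    hence "i = 0 \<or> i = 1" by auto
    thus "prods T i \<subseteq> prods Q 0" using assms by auto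
  qed
next
  case (Suc j)
  show ?case
  proof (intro allI impI)
    fix i :: nat assume i: "Suc j \<le> i \<and> i \<le> 2 * Suc j + 1"
    then obtain i' where i': "i = Suc i'" by (cases i) auto
    show "prods T i \<subseteq> prods Q (Suc j)"
    proof (cases "i' \<le> 2*j+1")
      case True
      hence "prods T i' \<subseteq> prods Q j" using Suc i i' by auto
      thus ?thesis using i' assms by (auto intro: set_mult_mono[THEN subsetD])
    next
      case False
      hence "i' = Suc (2*j+1)" using i i' by auto
      hence "prods T i = set_mult (set_mult (prods T (2*j+1)) T) T" using i' by simp
      also have "\<dots> \<subseteq> set_mult (prods T (2*j+1)) (set_mult T T)"
        unfolding set_mult_def by (force simp: mult.assoc)
      also have "\<dots> \<subseteq> set_mult (prods Q j) Q"
      proof (rule set_mult_mono)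
        show "prods T (2*j+1) \<subseteq> prods Q j" by (rule Suc.IH[rule_format]) simp
      qed (use assms in auto)
      finally show ?thesis by simp
    qed
  qed
qed

lemma expand_mult:
  fixes sm :: "'v::comm_ring_1 \<Rightarrow> 'd::ring \<Rightarrow> 'd"
  assumes va: "v_algebra sm"
  shows "(a1 + sm c b1) * (a2 + sm c b2) = a1 * a2 + sm c (a1 * b2 + b1 * a2 + b1 * sm c b2)"
proof -
  have add1: "\<And>a x y. sm a (x + y) = sm a x + sm a y"
   and m1: "\<And>a x y. sm a (x * y) = sm a x * y"
   and m2: "\<And>a x y. sm a (x * y) = x * sm a y" using va unfolding v_algebra_def by blast+
  show ?thesis by (simp add: algebra_simps add1 m1[symmetric] m2[symmetric])
qed


lemma prods_expand:
  fixes sm :: "'v::comm_ring_1 \<Rightarrow> 'd::ring \<Rightarrow> 'd"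
  assumes va: "v_algebra sm" and S: "S \<subseteq> pl sm (v_span sm F) c T" and FT: "F \<subseteq> T"
  shows "prods S i \<subseteq> pl sm (v_span sm (prods F i)) c (v_span sm (prods T i))"
proof (induction i)
  case 0
  show ?case
  proof
    fix x assume "x \<in> prods S 0"
    then obtain a b where ab: "x = a + sm c b" "a \<in> v_span sm F" "b \<in> T" using S unfolding pl_def by auto
    hence "b \<in> v_span sm T" using span_sub[of T sm] by blast
    thus "x \<in> pl sm (v_span sm (prods F 0)) c (v_span sm (prods T 0))" using ab unfolding pl_def by auto
  qed
next
  case (Suc i)
  show ?case
  proof
    fix x assume "x \<in> prods S (Suc i)"
    then obtain u s where us: "x = u * s" "u \<in> prods S i" "s \<in> S" unfolding prods.simps set_mult_def by blast
    have "u \<in> pl sm (v_span sm (prods F i)) c (v_span sm (prods T i))" using Suc.IH us(2) by (rule subsetD)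
    then obtain a b where ab: "u = a + sm c b" "a \<in> v_span sm (prods F i)" "b \<in> v_span sm (prods T i)"
      unfolding pl_def by blast
    have "s \<in> pl sm (v_span sm F) c T" using S us(3) by (rule subsetD)
    then obtain f t where ft: "s = f + sm c t" "f \<in> v_span sm F" "t \<in> T"
      unfolding pl_def by blast
    have x: "x = a * f + sm c (a * t + b * f + b * sm c t)"
      unfolding us(1) ab(1) ft(1) by (rule expand_mult[OF va])
    have a': "a \<in> v_span sm (prods T i)" using ab(2) span_mono[OF prods_mono[OF FT]] by blast
    have f': "f \<in> v_span sm T" using ft(2) span_mono[OF FT] by blast
    have t': "t \<in> v_span sm T" using ft(3) span_sub[of T sm] by blast
    have ct': "sm c t \<in> v_span sm T" using span_smult[OF t'] .
    have 1: "a * f \<in> v_span sm (prods F (Suc i))" using span_mult[OF va ab(2) ft(2)] unfolding prods.simps .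
    have "a * t + b * f + b * sm c t \<in> v_span sm (prods T (Suc i))"
      using span_mult[OF va a' t'] span_mult[OF va ab(3) f'] span_mult[OF va ab(3) ct']
      unfolding prods.simps by (intro span_add)
    thus "x \<in> pl sm (v_span sm (prods F (Suc i))) c (v_span sm (prods T (Suc i)))"
      using x 1 unfolding pl_def by blast
  qed
qed

lemma compactoid_alt:
  "compactoid sm p B S \<longleftrightarrow>
     (\<exists>T. T \<in> B \<and> v_submodule sm T \<and> S \<subseteq> T \<and>
        (\<forall>n::nat. \<exists>F. finite F \<and> F \<subseteq> T \<and> S \<subseteq> pl sm (v_span sm F) (p ^ n) T))"
  unfolding compactoid_def pl_eq ..

context
  fixes sm :: "'v::comm_ring_1 \<Rightarrow> 'd::ring \<Rightarrow> 'd" and p :: 'v and B :: "'d set set"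
  assumes ba: "bornological_algebra sm B"
begin

lemma va: "v_algebra sm" using ba by (simp add: bornological_algebra_def)
lemma bm: "bornological_module sm B" using ba by (simp add: bornological_algebra_def)
lemma bb: "bornology B" using bm by (simp add: bornological_module_def)
lemma bsub: "S \<in> B \<Longrightarrow> \<exists>T\<in>B. v_submodule sm T \<and> S \<subseteq> T"
  using bm by (simp add: bornological_module_def)
lemma bmul: "S \<in> B \<Longrightarrow> T \<in> B \<Longrightarrow> set_mult S T \<in> B"
  using ba by (simp add: bornological_algebra_def)
lemma bfin: "finite S \<Longrightarrow> S \<in> B" using bb by (simp add: bornology_def)
lemma bun: "S \<in> B \<Longrightarrow> T \<in> B \<Longrightarrow> S \<union> T \<in> B" using bb by (simp add: bornology_def)

lemma pl_zero: "x \<in> A \<Longrightarrow> 0 \<in> T' \<Longrightarrow> x \<in> pl sm A c T'"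
proof -
  assume "x \<in> A" "0 \<in> T'"
  moreover have "x = x + sm c 0" using sm_zero[OF va] by simp
  ultimately show ?thesis unfolding pl_def by blast
qed

lemma comp_finite: "finite S \<Longrightarrow> compactoid sm p B S"
proof -
  assume fin: "finite S"
  obtain T where T: "T \<in> B" "v_submodule sm T" "S \<subseteq> T" using bsub[OF bfin[OF fin]] by blast
  have z: "0 \<in> T" using T(2) unfolding v_submodule_def by blast
  have "S \<subseteq> pl sm (v_span sm S) (p ^ n) T" for n
    using pl_zero[OF _ z] span_sub[of S sm] by blast
  thus ?thesis unfolding compactoid_alt using T fin by blast
qed

lemma comp_subset: "compactoid sm p B S \<Longrightarrow> S' \<subseteq> S \<Longrightarrow> compactoid sm p B S'"
proof -
  assume c: "compactoid sm p B S" and s: "S' \<subseteq> S"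
  obtain T where T: "T \<in> B" "v_submodule sm T" "S \<subseteq> T"
    "\<forall>n::nat. \<exists>F. finite F \<and> F \<subseteq> T \<and> S \<subseteq> pl sm (v_span sm F) (p ^ n) T"
    using c unfolding compactoid_alt by blast
  have "\<forall>n::nat. \<exists>F. finite F \<and> F \<subseteq> T \<and> S' \<subseteq> pl sm (v_span sm F) (p ^ n) T"
    using T(4) s by (meson order_trans)
  thus ?thesis unfolding compactoid_alt using T s by blast
qed

lemma comp_union: "compactoid sm p B S1 \<Longrightarrow> compactoid sm p B S2 \<Longrightarrow> compactoid sm p B (S1 \<union> S2)"
proof -
  assume c1: "compactoid sm p B S1" and c2: "compactoid sm p B S2"
  obtain T1 where T1: "T1 \<in> B" "v_submodule sm T1" "S1 \<subseteq> T1"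
    "\<forall>n::nat. \<exists>F. finite F \<and> F \<subseteq> T1 \<and> S1 \<subseteq> pl sm (v_span sm F) (p ^ n) T1"
    using c1 unfolding compactoid_alt by blast
  obtain T2 where T2: "T2 \<in> B" "v_submodule sm T2" "S2 \<subseteq> T2"
    "\<forall>n::nat. \<exists>F. finite F \<and> F \<subseteq> T2 \<and> S2 \<subseteq> pl sm (v_span sm F) (p ^ n) T2"
    using c2 unfolding compactoid_alt by blast
  obtain T where T: "T \<in> B" "v_submodule sm T" "T1 \<union> T2 \<subseteq> T" using bsub[OF bun[OF T1(1) T2(1)]] by blast
  have "\<exists>F. finite F \<and> F \<subseteq> T \<and> S1 \<union> S2 \<subseteq> pl sm (v_span sm F) (p ^ n) T" for n
  proof -
    obtain F1 where F1: "finite F1" "F1 \<subseteq> T1" "S1 \<subseteq> pl sm (v_span sm F1) (p ^ n) T1" using T1(4) by blast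
    obtain F2 where F2: "finite F2" "F2 \<subseteq> T2" "S2 \<subseteq> pl sm (v_span sm F2) (p ^ n) T2" using T2(4) by blast
    have "pl sm (v_span sm F1) (p ^ n) T1 \<subseteq> pl sm (v_span sm (F1 \<union> F2)) (p ^ n) T"
      using span_mono[of F1 "F1 \<union> F2" sm] T(3) unfolding pl_def by blast
    moreover have "pl sm (v_span sm F2) (p ^ n) T2 \<subseteq> pl sm (v_span sm (F1 \<union> F2)) (p ^ n) T"
      using span_mono[of F2 "F1 \<union> F2" sm] T(3) unfolding pl_def by blast
    ultimately show ?thesis using F1 F2 T(3) by (intro exI[of _ "F1 \<union> F2"]) blast
  qed
  thus ?thesis unfolding compactoid_alt using T T1(3) T2(3) by blast
qed

lemma comp_span: "compactoid sm p B S \<Longrightarrow> compactoid sm p B (v_span sm S)"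
proof -
  assume c: "compactoid sm p B S"
  obtain T where T: "T \<in> B" "v_submodule sm T" "S \<subseteq> T"
    "\<forall>n::nat. \<exists>F. finite F \<and> F \<subseteq> T \<and> S \<subseteq> pl sm (v_span sm F) (p ^ n) T"
    using c unfolding compactoid_alt by blast
  have "\<exists>F. finite F \<and> F \<subseteq> T \<and> v_span sm S \<subseteq> pl sm (v_span sm F) (p ^ n) T" for n
  proof -
    obtain F where F: "finite F" "F \<subseteq> T" "S \<subseteq> pl sm (v_span sm F) (p ^ n) T" using T(4) by blast
    have "v_span sm S \<subseteq> pl sm (v_span sm F) (p ^ n) T"
      using span_least[OF pl_submod[OF va span_submod T(2)] F(3)] .
    thus ?thesis using F by blast
  qed
  thus ?thesis unfolding compactoid_alt using T span_least[OF T(2) T(3)] by blast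
qed

lemma comp_mult: "compactoid sm p B S1 \<Longrightarrow> compactoid sm p B S2 \<Longrightarrow> compactoid sm p B (set_mult S1 S2)"
proof -
  assume c1: "compactoid sm p B S1" and c2: "compactoid sm p B S2"
  obtain T1 where T1: "T1 \<in> B" "v_submodule sm T1" "S1 \<subseteq> T1"
    "\<forall>n::nat. \<exists>F. finite F \<and> F \<subseteq> T1 \<and> S1 \<subseteq> pl sm (v_span sm F) (p ^ n) T1"
    using c1 unfolding compactoid_alt by blast
  obtain T2 where T2: "T2 \<in> B" "v_submodule sm T2" "S2 \<subseteq> T2"
    "\<forall>n::nat. \<exists>F. finite F \<and> F \<subseteq> T2 \<and> S2 \<subseteq> pl sm (v_span sm F) (p ^ n) T2"
    using c2 unfolding compactoid_alt by blast
  obtain T where T: "T \<in> B" "v_submodule sm T" "set_mult T1 T2 \<subseteq> T" using bsub[OF bmul[OF T1(1) T2(1)]] by blast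
  have inT: "x * y \<in> T" if "x \<in> T1" "y \<in> T2" for x y using that T(3) unfolding set_mult_def by blast
  have "\<exists>F. finite F \<and> F \<subseteq> T \<and> set_mult S1 S2 \<subseteq> pl sm (v_span sm F) (p ^ n) T" for n
  proof -
    obtain F1 where F1: "finite F1" "F1 \<subseteq> T1" "S1 \<subseteq> pl sm (v_span sm F1) (p ^ n) T1" using T1(4) by blast
    obtain F2 where F2: "finite F2" "F2 \<subseteq> T2" "S2 \<subseteq> pl sm (v_span sm F2) (p ^ n) T2" using T2(4) by blast
    have "set_mult S1 S2 \<subseteq> pl sm (v_span sm (set_mult F1 F2)) (p ^ n) T"
    proof
      fix x assume "x \<in> set_mult S1 S2"
      then obtain s1 s2 where s: "x = s1 * s2" "s1 \<in> S1" "s2 \<in> S2" unfolding set_mult_def by auto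
      obtain a1 b1 where 1: "s1 = a1 + sm (p^n) b1" "a1 \<in> v_span sm F1" "b1 \<in> T1"
        using s(2) F1(3) unfolding pl_def by blast
      obtain a2 b2 where 2: "s2 = a2 + sm (p^n) b2" "a2 \<in> v_span sm F2" "b2 \<in> T2"
        using s(3) F2(3) unfolding pl_def by blast
      have x: "x = a1 * a2 + sm (p^n) (a1 * b2 + b1 * a2 + b1 * sm (p^n) b2)"
        using s 1 2 expand_mult[OF va] by simp
      have a1': "a1 \<in> T1" using 1(2) span_least[OF T1(2) F1(2)] by blast
      have a2': "a2 \<in> T2" using 2(2) span_least[OF T2(2) F2(2)] by blast
      have b2': "sm (p^n) b2 \<in> T2" using 2(3) T2(2) unfolding v_submodule_def by blast
      have "a1 * b2 + b1 * a2 + b1 * sm (p^n) b2 \<in> T"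
        using inT[OF a1' 2(3)] inT[OF 1(3) a2'] inT[OF 1(3) b2'] T(2) unfolding v_submodule_def by blast
      moreover have "a1 * a2 \<in> v_span sm (set_mult F1 F2)" using span_mult[OF va 1(2) 2(2)] .
      ultimately show "x \<in> pl sm (v_span sm (set_mult F1 F2)) (p ^ n) T" using x unfolding pl_def by blast
    qed
    moreover have "set_mult F1 F2 \<subseteq> T" using F1(2) F2(2) inT unfolding set_mult_def by blast
    ultimately show ?thesis using finite_set_mult[OF F1(1) F2(1)] by blast
  qed
  moreover have "set_mult S1 S2 \<subseteq> T" using T1(3) T2(3) inT unfolding set_mult_def by blast
  ultimately show ?thesis unfolding compactoid_alt using T by blast
qed

lemma comp_alg: "bornological_algebra sm (compactoid_bornology sm p B)"
proof -
  have "bornology (compactoid_bornology sm p B)"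
    unfolding bornology_def compactoid_bornology_def
    using comp_finite comp_union comp_subset by auto
  moreover have "\<forall>S\<in>compactoid_bornology sm p B. \<exists>T\<in>compactoid_bornology sm p B. v_submodule sm T \<and> S \<subseteq> T"
    unfolding compactoid_bornology_def
  proof
    fix S assume "S \<in> {S. compactoid sm p B S}"
    hence "compactoid sm p B (v_span sm S)" using comp_span by auto
    thus "\<exists>T\<in>{S. compactoid sm p B S}. v_submodule sm T \<and> S \<subseteq> T"
      using span_sub[of S sm] span_submod[of sm S] by blast
  qed
  moreover have "\<forall>S\<in>compactoid_bornology sm p B. \<forall>T\<in>compactoid_bornology sm p B. set_mult S T \<in> compactoid_bornology sm p B"
    unfolding compactoid_bornology_def using comp_mult by auto
  ultimately show ?thesis unfolding bornological_algebra_def bornological_module_def using va by blast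
qed

lemma comp_dagger:
  assumes sd: "semidagger sm p B" and c: "compactoid sm p B S"
  shows "compactoid sm p B (v_span sm (\<Union>i. sm (p ^ i) ` prods S i))"
proof -
  have smmul: "\<And>a b x. sm (a * b) x = sm a (sm b x)"
   and add1: "\<And>a x y. sm a (x + y) = sm a x + sm a y" using va unfolding v_algebra_def by blast+
  obtain T where T: "T \<in> B" "v_submodule sm T" "S \<subseteq> T"
    "\<forall>n::nat. \<exists>F. finite F \<and> F \<subseteq> T \<and> S \<subseteq> pl sm (v_span sm F) (p ^ n) T"
    using c unfolding compactoid_alt by blast
  define Q where "Q = T \<union> set_mult T T"
  have QB: "Q \<in> B" unfolding Q_def using bun[OF T(1) bmul[OF T(1) T(1)]] .
  have TQ: "T \<subseteq> Q" "set_mult T T \<subseteq> Q" unfolding Q_def by auto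
  define W where "W = v_span sm (\<Union>i. sm (p ^ i) ` prods Q i)"
  have WB: "W \<in> B" using sd QB unfolding semidagger_def W_def by blast
  have Wsub: "v_submodule sm W" unfolding W_def by (rule span_submod)
  have gen: "sm (p ^ i) x \<in> W" if "x \<in> prods Q i" for x i
    using that span_sub[of "\<Union>i. sm (p ^ i) ` prods Q i" sm] unfolding W_def by blast
  have genT: "v_span sm (sm (p ^ i) ` prods T i) \<subseteq> W" for i
  proof (rule span_least[OF Wsub])
    show "sm (p ^ i) ` prods T i \<subseteq> W" using gen prods_mono[OF TQ(1), of i] by blast
  qed
  let ?U = "v_span sm (\<Union>i. sm (p ^ i) ` prods S i)"
  have UW: "?U \<subseteq> W"
  proof (rule span_least[OF Wsub])
    show "(\<Union>i. sm (p ^ i) ` prods S i) \<subseteq> W"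
      using gen prods_mono[of S Q] T(3) TQ(1) by blast
  qed
  have "\<exists>F'. finite F' \<and> F' \<subseteq> W \<and> ?U \<subseteq> pl sm (v_span sm F') (p ^ n) W" for n
  proof -
    obtain F where F: "finite F" "F \<subseteq> T" "S \<subseteq> pl sm (v_span sm F) (p ^ n) T" using T(4) by blast
    define F' where "F' = (\<Union>i\<in>{..<2*n}. sm (p ^ i) ` prods F i)"
    have finF': "finite F'" unfolding F'_def using finite_prods[OF F(1)] by blast
    have F'W: "F' \<subseteq> W" unfolding F'_def using gen prods_mono[of F Q] F(2) TQ(1) by blast
    have "?U \<subseteq> pl sm (v_span sm F') (p ^ n) W"
    proof (rule span_least[OF pl_submod[OF va span_submod Wsub]])
      show "(\<Union>i. sm (p ^ i) ` prods S i) \<subseteq> pl sm (v_span sm F') (p ^ n) W"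
      proof
        fix y assume "y \<in> (\<Union>i. sm (p ^ i) ` prods S i)"
        then obtain i x where y: "y = sm (p ^ i) x" "x \<in> prods S i" by blast
        show "y \<in> pl sm (v_span sm F') (p ^ n) W"
        proof (cases "i < 2 * n")
          case True
          have "x \<in> pl sm (v_span sm (prods F i)) (p ^ n) (v_span sm (prods T i))"
            using prods_expand[OF va F(3) F(2)] y(2) by (rule subsetD)
          then obtain a b where ab: "x = a + sm (p ^ n) b" "a \<in> v_span sm (prods F i)"
            "b \<in> v_span sm (prods T i)" unfolding pl_def by blast
          have yy: "y = sm (p ^ i) a + sm (p ^ n) (sm (p ^ i) b)"
            using y(1) ab(1) add1 sm_comm[OF va] by simp
          have "sm (p ^ i) a \<in> v_span sm (sm (p ^ i) ` prods F i)"
            using span_scale[OF va] ab(2) by blast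
          moreover have "v_span sm (sm (p ^ i) ` prods F i) \<subseteq> v_span sm F'"
            by (rule span_mono) (use True in \<open>auto simp: F'_def\<close>)
          moreover have "sm (p ^ i) b \<in> W"
            using span_scale[OF va] ab(3) genT by blast
          ultimately show ?thesis using yy unfolding pl_def by blast
        next
          case False
          have "x \<in> prods T i" using prods_mono[OF T(3)] y(2) by blast
          moreover have "prods T i \<subseteq> prods Q (i - n)"
            using prods_group[OF TQ, of "i - n"] False by auto
          ultimately have xq: "x \<in> prods Q (i - n)" by blast
          have "p ^ i = p ^ n * p ^ (i - n)" using False by (simp add: power_add[symmetric])
          hence "y = 0 + sm (p ^ n) (sm (p ^ (i - n)) x)" using y(1) smmul by simp
          thus ?thesis using gen[OF xq] span_zero unfolding pl_def by blast
        qed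
      qed
    qed
    thus ?thesis using finF' F'W by blast
  qed
  thus ?thesis unfolding compactoid_alt using WB Wsub UW by blast
qed

end

theorem lemma4p7:
  fixes sm :: "'v::idom \<Rightarrow> 'd::ring \<Rightarrow> 'd" and p :: 'v and B :: "'d set set"
  assumes "dvr_uniformiser p" and "pi_adically_complete p"
    and "bornological_algebra sm B"
  shows "bornological_algebra sm (compactoid_bornology sm p B)
    \<and> (semidagger sm p B \<longrightarrow> semidagger sm p (compactoid_bornology sm p B))"
  using comp_alg[OF assms(3)] comp_dagger[OF assms(3)]
  unfolding semidagger_def compactoid_bornology_def by auto

end
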